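(* Let $g\ge1$ and let $\alpha_1,\dots,\alpha_{2g-1},\alpha$ be mutually distinct complex numbers. Let $\widehat q^{(g)0}_{ij}$ and $\widehat q^{(g-1)}_{ij}$ be defined by the expansions (in $z_1,z_2$ with $x_k=z_k^{-2}$) $$\Big(\frac1{2(x_1-x_2)^2}+\frac{H_g(x_1,x_2)}{4(x_1-x_2)^2y^{(g)}_1y^{(g)}_2}\Big)dx_1dx_2=\Big(\frac1{(z_1-z_2)^2}+\sum_{i,j\ge1}\widehat q^{(g)0}_{ij}z_1^{i-1}z_2^{j-1}\Big)dz_1dz_2,$$ $$\Big(\frac1{2(x_1-x_2)^2}+\frac{H_{g-1}(x_1,x_2)}{4(x_1-x_2)^2y^{(g-1)}_1y^{(g-1)}_2}\Big)dx_1dx_2=\Big(\frac1{(z_1-z_2)^2}+\sum_{i,j\ge1}\widehat q^{(g-1)}_{ij}z_1^{i-1}z_2^{j-1}\Big)dz_1dz_2,$$ and put $Q_{ij}=-\widehat q^{(g)0}_{ij}+\widehat q^{(g-1)}_{ij}$. Then for all $i,j\ge0$, $$Q_{2i+1,2j+1}=-\alpha\sum_{k=0}^{g-1}\tilde\mu_{4k}\,s_{(i-k)}(\Lambda)\,s_{(j-k)}(\Lambda).$$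
   Context: $f_{g-1}(x)=\prod_{j=1}^{2g-1}(x-\alpha_j)=\sum_{i=0}^{2g-1}\tilde\mu_{4g-2-2i}x^i$ and $f_g(x)=(x-\alpha)^2f_{g-1}(x)=\sum_{i=0}^{2g+1}\mu_{4g+2-2i}x^i$, with $\mu_k,\tilde\mu_k=0$ for indices outside these ranges. $H_g(x_1,x_2)=\sum_{i=0}^g(x_1x_2)^i(2\mu_{4g+2-4i}+\mu_{4g-4i}(x_1+x_2))$, $H_{g-1}(x_1,x_2)=\sum_{i=0}^{g-1}(x_1x_2)^i(2\tilde\mu_{4g-2-4i}+\tilde\mu_{4g-4-4i}(x_1+x_2))$. $F_0(z)=(\prod_{j=1}^{2g-1}(1-\alpha_jz^2))^{1/2}$ with $F_0(0)=1$, $F(z)=(1-\alpha z^2)F_0(z)$, $y^{(g-1)}_k=z_k^{-(2g-1)}F_0(z_k)$, $y^{(g)}_k=z_k^{-(2g+1)}F(z_k)$. $\Lambda=(\Lambda_1,\Lambda_2,\dots)$ with $\Lambda_n=\frac1{2n}(2\alpha^n+\sum_{j=1}^{2g-1}\alpha_j^n)$; Schur polynomials $s_{(n)}$ are defined by $\exp(\sum_{i\ge1}t_ik^i)=\sum_{n\ge0}s_{(n)}(t)k^n$, and $s_{(n)}=0$ for $n<0$. *)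

theory Defs
  imports "HOL-Analysis.Analysis" "HOL-Computational_Algebra.Formal_Power_Series"
    "HOL-Computational_Algebra.Polynomial"
begin

definition fpoly :: "(nat \<Rightarrow> complex) \<Rightarrow> nat \<Rightarrow> complex poly" where
  "fpoly al n = (\<Prod>j=1..n. [:- al j, 1:])"

definition mucoef :: "nat \<Rightarrow> complex poly \<Rightarrow> nat \<Rightarrow> complex" where
  "mucoef N p k = (if even k \<and> k div 2 \<le> N then coeff p (N - k div 2) else 0)"

definition Hfun :: "nat \<Rightarrow> (nat \<Rightarrow> complex) \<Rightarrow> complex \<Rightarrow> complex \<Rightarrow> complex" where
  "Hfun h mu x1 x2 = (\<Sum>i=0..h. (x1 * x2) ^ i * (2 * mu (4*h + 2 - 4*i) + mu (4*h - 4*i) * (x1 + x2)))"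

text \<open>F_0(z) = (prod_{j=1}^{2g-1}(1 - alpha_j z^2))^{1/2}, the branch with F_0(0) = 1
  (near z = 0 this is the principal square root).\<close>
definition F0fun :: "(nat \<Rightarrow> complex) \<Rightarrow> nat \<Rightarrow> complex \<Rightarrow> complex" where
  "F0fun al g z = csqrt (\<Prod>j=1..2*g-1. 1 - al j * z^2)"

definition Lam :: "(nat \<Rightarrow> complex) \<Rightarrow> complex \<Rightarrow> nat \<Rightarrow> nat \<Rightarrow> complex" where
  "Lam al a g n = (2 * a ^ n + (\<Sum>j=1..2*g-1. al j ^ n)) / (2 * of_nat n)"

definition schur :: "(nat \<Rightarrow> complex) \<Rightarrow> int \<Rightarrow> complex" where
  "schur t m = (if m < 0 then 0 else
      fps_nth (fps_exp 1 oo Abs_fps (\<lambda>n. if n = 0 then 0 else t n)) (nat m))"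

text \<open>The expansion defining qhat: with x_k = z_k^{-2}, dx_k = -2 z_k^{-3} dz_k,
  (1/(2(x1-x2)^2) + H(x1,x2)/(4(x1-x2)^2 y(z1) y(z2))) dx1 dx2
     = (1/(z1-z2)^2 + sum_{i,j>=1} q_ij z1^(i-1) z2^(j-1)) dz1 dz2
  for all z1, z2 in a punctured neighbourhood of 0 (away from x1 = x2),
  the double series converging (absolutely).\<close>
definition expansion ::
  "(complex \<Rightarrow> complex \<Rightarrow> complex) \<Rightarrow> (complex \<Rightarrow> complex) \<Rightarrow> (nat \<Rightarrow> nat \<Rightarrow> complex) \<Rightarrow> bool" where
  "expansion H y q \<longleftrightarrow> (\<exists>r>0. \<forall>z1 z2. z1 \<noteq> 0 \<and> z2 \<noteq> 0 \<and> norm z1 < r \<and> norm z2 < r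
      \<and> z1^2 \<noteq> z2^2 \<longrightarrow>
     (let x1 = 1 / z1^2; x2 = 1 / z2^2 in
      ((\<lambda>(i,j). q i j * z1 ^ (i - 1) * z2 ^ (j - 1)) has_sum
        ((1 / (2 * (x1 - x2)^2) + H x1 x2 / (4 * (x1 - x2)^2 * y z1 * y z2))
           * ((-2 / z1^3) * (-2 / z2^3)) - 1 / (z1 - z2)^2)) ({1..} \<times> {1..})))"

end

theory Submission
  imports Defs "HOL-Complex_Analysis.Complex_Analysis"
begin
definition Rf :: "complex \<Rightarrow> complex fps" where "Rf b = Abs_fps (\<lambda>n. b^(n+1))"

lemma Rf_mult: "Rf b * (1 - fps_const b * fps_X) = fps_const b"
proof (rule fps_ext)
  fix n
  have "Rf b * (1 - fps_const b * fps_X) = Rf b - fps_const b * (fps_X * Rf b)"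
    by (simp add: algebra_simps)
  then show "(Rf b * (1 - fps_const b * fps_X)) $ n = fps_const b $ n"
    by (cases n) (auto simp: Rf_def)
qed

lemma logderiv:
  assumes "finite A"
  shows "(\<Sum>j\<in>A. Rf (b j)) * (\<Prod>j\<in>A. (1 - fps_const (b j) * fps_X))
         = - fps_deriv (\<Prod>j\<in>A. (1 - fps_const (b j) * fps_X))"
  using assms
proof (induction A rule: finite_induct)
  case empty then show ?case by simp
next
  case (insert x F)
  define P where "P = (\<Prod>j\<in>F. (1 - fps_const (b j) * fps_X))"
  define Rs where "Rs = (\<Sum>j\<in>F. Rf (b j))"
  have IH: "Rs * P = - fps_deriv P" using insert unfolding P_def Rs_def by simp
  have d: "fps_deriv (1 - fps_const (b x) * fps_X) = - fps_const (b x)" by simp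
  have "(Rf (b x) + Rs) * ((1 - fps_const (b x) * fps_X) * P)
     = (Rf (b x) * (1 - fps_const (b x) * fps_X)) * P + (1 - fps_const (b x) * fps_X) * (Rs * P)"
    by (simp add: algebra_simps)
  also have "\<dots> = fps_const (b x) * P - (1 - fps_const (b x) * fps_X) * fps_deriv P"
    by (simp add: Rf_mult IH)
  also have "\<dots> = - fps_deriv ((1 - fps_const (b x) * fps_X) * P)"
    by (simp add: fps_deriv_mult d algebra_simps)
  finally show ?case using insert unfolding P_def Rs_def by simp
qed

lemma prod_nth0: "(\<Prod>j\<in>A. (1 - fps_const (b j) * fps_X)) $ 0 = (1::complex)"
  by (induction A rule: infinite_finite_induct) auto

definition Lfps where "Lfps al a g = Abs_fps (\<lambda>n. if n = 0 then 0 else Lam al a g n)"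
definition Sfps where "Sfps al a g = fps_exp 1 oo Lfps al a g"
definition Gfps where "Gfps al a g = (1 - fps_const a * fps_X)^2 * (\<Prod>j\<in>{1..2*g-1}. (1 - fps_const (al j) * fps_X))"

lemma S_sq_G: "Sfps al a g ^ 2 * Gfps al a g = 1"
proof -
  define L where "L = Lfps al a g"
  define S where "S = Sfps al a g"
  define P where "P = (\<Prod>j\<in>{1..2*g-1}. (1 - fps_const (al j) * fps_X))"
  define E where "E = (1 - fps_const a * fps_X)"
  have L0: "L $ 0 = 0" by (simp add: L_def Lfps_def)
  have dS: "fps_deriv S = S * fps_deriv L"
    unfolding S_def Sfps_def L_def[symmetric] using fps_compose_deriv[OF L0, of "fps_exp 1"]
    by simp
  have dL: "2 * fps_deriv L = 2 * Rf a + (\<Sum>j\<in>{1..2*g-1}. Rf (al j))"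
  proof (rule fps_ext)
    fix n
    have "(2 * fps_deriv L) $ n = 2 * (of_nat (n+1) * Lam al a g (n+1))"
      by (simp add: L_def Lfps_def fps_deriv_def)
    also have "\<dots> = 2 * a^(n+1) + (\<Sum>j\<in>{1..2*g-1}. al j^(n+1))"
    proof -
      have c: "(of_nat (n+1)::complex) \<noteq> 0" by (simp only: of_nat_eq_0_iff)
      have "\<And>X c. c \<noteq> 0 \<Longrightarrow> 2 * (c * (X / (2 * c))) = (X::complex)" by simp
      from this[OF c] show ?thesis unfolding Lam_def .
    qed
    also have "\<dots> = (2 * Rf a + (\<Sum>j\<in>{1..2*g-1}. Rf (al j))) $ n"
      by (simp add: Rf_def fps_sum_nth)
    finally show "(2 * fps_deriv L) $ n = (2 * Rf a + (\<Sum>j\<in>{1..2*g-1}. Rf (al j))) $ n" .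
  qed
  have ld: "(\<Sum>j\<in>{1..2*g-1}. Rf (al j)) * P = - fps_deriv P"
    unfolding P_def by (rule logderiv) simp
  have RE: "Rf a * E = fps_const a" unfolding E_def by (rule Rf_mult)
  have dE: "fps_deriv E = - fps_const a" unfolding E_def by simp
  have key: "2 * fps_deriv L * (E^2 * P) + fps_deriv (E^2 * P) = 0"
  proof -
    have "2 * fps_deriv L * (E^2 * P) = 2 * (Rf a * E) * E * P + E^2 * ((\<Sum>j\<in>{1..2*g-1}. Rf (al j)) * P)"
      unfolding dL by (simp add: power2_eq_square algebra_simps)
    also have "\<dots> = 2 * fps_const a * E * P - E^2 * fps_deriv P"
      unfolding RE ld by simp
    finally show ?thesis
      by (simp add: fps_deriv_mult fps_deriv_power dE power2_eq_square algebra_simps fps_const_neg[symmetric] del: fps_const_neg)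
  qed
  define T where "T = S^2 * (E^2 * P)"
  have "fps_deriv T = S^2 * (2 * fps_deriv L * (E^2 * P) + fps_deriv (E^2 * P))"
    unfolding T_def by (simp add: fps_deriv_mult fps_deriv_power dS power2_eq_square algebra_simps)
  also have "\<dots> = 0" by (simp only: key mult_zero_right)
  finally have "T = fps_const (T $ 0)" by simp
  moreover have "T $ 0 = 1"
    unfolding T_def S_def Sfps_def E_def P_def by (simp add: prod_nth0 power2_eq_square)
  ultimately have "T = 1" by simp
  then show ?thesis unfolding T_def S_def E_def P_def Gfps_def by simp
qed

lemma h_series:
  fixes al :: "nat \<Rightarrow> complex" and a :: complex and g :: nat
  shows "\<exists>r>0. \<forall>u. norm u < r \<longrightarrow> (1 - a*u) * csqrt (\<Prod>j\<in>{1..2*g-1}. 1 - al j * u) \<noteq> 0 \<and>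
     ((\<lambda>n. Sfps al a g $ n * u^n) has_sum (1 / ((1 - a*u) * csqrt (\<Prod>j\<in>{1..2*g-1}. 1 - al j * u)))) UNIV"
proof -
  define p where "p = (\<lambda>u. \<Prod>j\<in>{1..2*g-1}. 1 - al j * u)"
  define h where "h = (\<lambda>u. inverse ((1 - a*u) * csqrt (p u)))"
  define S where "S = Sfps al a g"
  define G where "G = Gfps al a g"
  have p0: "p 0 = 1" by (simp add: p_def)
  have an: "h analytic_on {0}"
    unfolding h_def p_def by (intro analytic_intros) (auto simp: p0[unfolded p_def])
  define B where "B = fps_expansion h 0"
  have hB: "h has_fps_expansion B"
    unfolding B_def by (rule analytic_at_imp_has_fps_expansion_0[OF an])
  have hG: "(\<lambda>u. (1 - a*u)^2 * p u) has_fps_expansion G"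
    unfolding G_def Gfps_def p_def by (intro fps_expansion_intros)
  have opn: "open {u. (1 - a*u) * p u \<noteq> 0}"
    unfolding p_def by (intro open_Collect_neq continuous_intros)
  have ev: "eventually (\<lambda>u. (1 - a*u) * p u \<noteq> 0) (nhds 0)"
    using eventually_nhds_in_open[OF opn] p0 by simp
  have ev1: "eventually (\<lambda>u. h u ^ 2 * ((1 - a*u)^2 * p u) = 1) (nhds 0)"
  proof (rule eventually_mono[OF ev])
    fix u assume nz: "(1 - a*u) * p u \<noteq> 0"
    have "h u ^ 2 = inverse ((1 - a*u)^2 * p u)"
      unfolding h_def by (simp only: power_inverse power_mult_distrib power2_csqrt)
    moreover have "(1 - a*u)^2 * p u \<noteq> 0" using nz by simp
    ultimately show "h u ^ 2 * ((1 - a*u)^2 * p u) = 1" by (metis left_inverse)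
  qed
  have "(\<lambda>u. h u ^ 2 * ((1 - a*u)^2 * p u)) has_fps_expansion B^2 * G"
    by (intro fps_expansion_intros hB hG)
  then have "(\<lambda>u. 1) has_fps_expansion B^2 * G"
    using has_fps_expansion_cong[OF ev1 refl] by simp
  then have BG: "B^2 * G = 1"
    using fps_expansion_unique_complex has_fps_expansion_1 by blast
  have SG: "S^2 * G = 1" unfolding S_def G_def by (rule S_sq_G)
  have "G \<noteq> 0" using SG by auto
  with BG SG have "B^2 = S^2" by (metis mult_right_cancel)
  then have "(B - S) * (B + S) = 0" by (simp add: power2_eq_square algebra_simps)
  moreover have "B $ 0 = 1"
    using has_fps_expansion_imp_0_eq_fps_nth_0[OF hB] p0 by (simp add: h_def)
  moreover have "S $ 0 = 1" by (simp add: S_def Sfps_def)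
  ultimately have BS: "B = S"
  proof -
    assume a1: "(B - S) * (B + S) = 0" and a2: "B $ 0 = 1" and a3: "S $ 0 = 1"
    have "B + S \<noteq> 0"
    proof
      assume "B + S = 0"
      then have "(B + S) $ 0 = 0" by simp
      then show False using a2 a3 by simp
    qed
    with a1 have "B - S = 0" by simp
    then show "B = S" by simp
  qed
  have rad: "fps_conv_radius S > 0" and ev2: "eventually (\<lambda>u. eval_fps S u = h u) (nhds 0)"
    using hB unfolding BS has_fps_expansion_def by auto
  have ev3: "eventually (\<lambda>u. u \<in> eball 0 (fps_conv_radius S)) (nhds 0)"
    by (rule eventually_nhds_in_open) (use rad in \<open>auto simp: zero_ereal_def\<close>)
  have "eventually (\<lambda>u. (1 - a*u) * p u \<noteq> 0 \<and> eval_fps S u = h u \<and> u \<in> eball 0 (fps_conv_radius S)) (nhds 0)"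
    using ev ev2 ev3 by eventually_elim auto
  then obtain d where d: "d > 0" "\<And>u. dist u 0 < d \<Longrightarrow> (1 - a*u) * p u \<noteq> 0 \<and> eval_fps S u = h u \<and> u \<in> eball 0 (fps_conv_radius S)"
    unfolding eventually_nhds_metric by blast
  show ?thesis
  proof (intro exI[of _ d] conjI allI impI d(1))
    fix u :: complex assume "norm u < d"
    then have u: "(1 - a*u) * p u \<noteq> 0" "eval_fps S u = h u" "u \<in> eball 0 (fps_conv_radius S)"
      using d(2)[of u] by auto
    from u(1) show "(1 - a*u) * csqrt (\<Prod>j\<in>{1..2*g-1}. 1 - al j * u) \<noteq> 0" by (auto simp: p_def)
    have nu: "ereal (norm u) < fps_conv_radius S" using u(3) by simp
    have "(\<lambda>n. S $ n * u^n) sums h u" using sums_eval_fps[OF nu] u(2) by simp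
    moreover have "summable (\<lambda>n. norm (S $ n * u^n))" by (rule norm_summable_fps[OF nu])
    ultimately have "((\<lambda>n. S $ n * u^n) has_sum h u) UNIV"
      by (intro norm_summable_imp_has_sum)
    then show "((\<lambda>n. Sfps al a g $ n * u^n) has_sum (1 / ((1 - a*u) * csqrt (\<Prod>j\<in>{1..2*g-1}. 1 - al j * u)))) UNIV"
      by (simp add: S_def h_def p_def inverse_eq_divide)
  qed
qed

lemma PI_generic:
  fixes M :: "nat \<Rightarrow> complex" and n :: nat and a P S :: complex
  assumes M0: "\<And>t. t > 2*n+1 \<Longrightarrow> M t = 0"
  assumes m'_def: "m' = (\<lambda>t. M t - 2*a*(if t \<ge> 1 then M (t-1) else 0) + a^2*(if t \<ge> 2 then M (t-2) else 0))"
  shows "(\<Sum>j=0..n. P^(n-j) * (2*M(2*j+1) + M(2*j)*S)) * (P - a*S + a^2)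
       - (\<Sum>j=0..Suc n. P^(Suc n-j) * (2*m'(2*j+1) + m'(2*j)*S))
       = -a*(S^2-4*P)*(\<Sum>k=0..n. M(2*k)*P^(n-k))"
proof -
  define A where "A = (\<lambda>j. 2*M(2*j+1) + M(2*j)*S)"
  have AS: "A (Suc n) = 0" unfolding A_def using M0 by simp
  have s1: "(\<Sum>j=0..n. P^(n-j) * A j) * P = (\<Sum>j=0..Suc n. P^(Suc n-j) * A j)"
  proof -
    have "(\<Sum>j=0..n. P^(n-j) * A j) * P = (\<Sum>j=0..n. P^(Suc n-j) * A j)"
      unfolding sum_distrib_right by (intro sum.cong refl) (simp add: Suc_diff_le mult_ac)
    then show ?thesis by (simp add: AS)
  qed
  have s2: "(\<Sum>j=0..n. P^(n-j) * A j) * (a^2 - a*S)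
       = (\<Sum>j=0..Suc n. P^(Suc n-j) * ((if j = 0 then 0 else A (j-1)) * (a^2 - a*S)))"
    unfolding sum.atLeast0_atMost_Suc_shift sum_distrib_right by (simp add: mult_ac)
  have M2: "M (2*Suc n) = 0" using M0 by simp
  have s3: "(\<Sum>k=0..n. M(2*k)*P^(n-k)) * P = (\<Sum>j=0..Suc n. P^(Suc n-j) * M(2*j))"
  proof -
    have "(\<Sum>k=0..n. M(2*k)*P^(n-k)) * P = (\<Sum>j=0..n. P^(Suc n-j) * M(2*j))"
      unfolding sum_distrib_right by (intro sum.cong refl) (simp add: Suc_diff_le mult_ac)
    then show ?thesis using M2 by simp
  qed
  have s4: "(\<Sum>k=0..n. M(2*k)*P^(n-k)) = (\<Sum>j=0..Suc n. P^(Suc n-j) * (if j = 0 then 0 else M(2*j-2)))"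
    unfolding sum.atLeast0_atMost_Suc_shift by (simp add: mult_ac)
  have H1: "(\<Sum>j=0..n. P^(n-j) * (2*M(2*j+1) + M(2*j)*S)) = (\<Sum>j=0..n. P^(n-j) * A j)"
    unfolding A_def ..
  have "(\<Sum>j=0..n. P^(n-j) * A j) * (P - a*S + a^2) 
      = (\<Sum>j=0..n. P^(n-j) * A j) * P + (\<Sum>j=0..n. P^(n-j) * A j) * (a^2 - a*S)"
    by (simp add: algebra_simps)
  also have "\<dots> = (\<Sum>j=0..Suc n. P^(Suc n-j) * (A j + (if j = 0 then 0 else A (j-1)) * (a^2 - a*S)))"
    unfolding s1 s2 by (simp only: sum.distrib[symmetric] distrib_left)
  finally have L0: "(\<Sum>j=0..n. P^(n-j) * A j) * (P - a*S + a^2) = (\<Sum>j=0..Suc n. P^(Suc n-j) * (A j + (if j = 0 then 0 else A (j-1)) * (a^2 - a*S)))" .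
  have L: "(\<Sum>j=0..n. P^(n-j) * A j) * (P - a*S + a^2)
       - (\<Sum>j=0..Suc n. P^(Suc n-j) * (2*m'(2*j+1) + m'(2*j)*S))
     = (\<Sum>j=0..Suc n. P^(Suc n-j) * (A j + (if j = 0 then 0 else A (j-1)) * (a^2 - a*S)
          - (2*m'(2*j+1) + m'(2*j)*S)))"
    unfolding L0 by (simp only: sum_subtractf[symmetric] right_diff_distrib)
  have R: "-a*(S^2-4*P)*(\<Sum>k=0..n. M(2*k)*P^(n-k))
     = (\<Sum>j=0..Suc n. P^(Suc n-j) * (-a*S^2*(if j = 0 then 0 else M(2*j-2)) + 4*a*M(2*j)))"
  proof -
    have "-a*(S^2-4*P)*(\<Sum>k=0..n. M(2*k)*P^(n-k))
       = -a*S^2*(\<Sum>k=0..n. M(2*k)*P^(n-k)) + 4*a*((\<Sum>k=0..n. M(2*k)*P^(n-k))*P)"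
      by (simp add: algebra_simps)
    also have "\<dots> = -a*S^2*(\<Sum>j=0..Suc n. P^(Suc n-j) * (if j = 0 then 0 else M(2*j-2)))
        + 4*a*(\<Sum>j=0..Suc n. P^(Suc n-j) * M(2*j))"
      by (simp only: s3 flip: s4)
    also have "\<dots> = (\<Sum>j=0..Suc n. P^(Suc n-j) * (-a*S^2*(if j = 0 then 0 else M(2*j-2)) + 4*a*M(2*j)))"
      by (simp only: sum_distrib_left sum.distrib[symmetric]) (intro sum.cong refl, simp add: algebra_simps)
    finally show ?thesis .
  qed
  have T: "A j + (if j = 0 then 0 else A (j-1)) * (a^2 - a*S) - (2*m'(2*j+1) + m'(2*j)*S)
        = -a*S^2*(if j = 0 then 0 else M(2*j-2)) + 4*a*M(2*j)" for j
  proof (cases j)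
    case 0 then show ?thesis by (simp add: A_def m'_def algebra_simps)
  next
    case (Suc i)
    have e: "2*j+1-1 = 2*i+2" "2*j+1-2 = 2*i+1" "2*j-1 = 2*i+1" "2*j-2 = 2*i" "2*(j-1)+1 = 2*i+1" "2*(j-1) = 2*i"
      using Suc by auto
    show ?thesis using Suc unfolding A_def m'_def
      by (simp only: e) (simp add: algebra_simps power2_eq_square)
  qed
  show ?thesis unfolding H1 L R by (simp only: T)
qed

lemma fpoly_coeff_0: "k > n \<Longrightarrow> coeff (fpoly al n) k = 0"
proof -
  assume k: "k > n"
  have "degree (fpoly al n) \<le> (\<Sum>j\<in>{1..n}. degree [:- al j, 1:])"
    unfolding fpoly_def using degree_prod_sum_le[of "{1..n}" "\<lambda>j. [:- al j, 1:]"] by (simp add: o_def)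
  also have "\<dots> = n" by simp
  finally show ?thesis using k by (intro coeff_eq_0) simp
qed

lemma sq_mult_coeff:
  fixes a :: complex and q :: "complex poly"
  shows
  "coeff ([:- a, 1:]^2 * q) k = (if k \<ge> 2 then coeff q (k-2) else 0) - 2*a*(if k \<ge> 1 then coeff q (k-1) else 0) + a^2 * coeff q k"
proof -
  have e1: "[:- a, 1:] * p = pCons 0 p - smult a p" for p :: "complex poly"
    by (simp add: mult_pCons_left)
  have e: "[:- a, 1:]^2 * q = pCons 0 (pCons 0 q) - smult (2*a) (pCons 0 q) + smult (a^2) q"
    by (simp add: power2_eq_square e1 mult.assoc smult_diff_right power2_eq_square smult_pCons algebra_simps)
  show ?thesis unfolding e
    by (cases k; cases "k - 1") (auto simp: coeff_pCons algebra_simps split: nat.splits)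
qed
lemma mu_rel:
  fixes al :: "nat \<Rightarrow> complex" and a :: complex
  assumes g: "g = Suc n"
  defines "mt \<equiv> mucoef (2*g-1) (fpoly al (2*g-1))"
  defines "m \<equiv> mucoef (2*g+1) ([:- a, 1:]^2 * fpoly al (2*g-1))"
  shows "m (2*t) = mt (2*t) - 2*a*(if t \<ge> 1 then mt (2*(t-1)) else 0) + a^2*(if t \<ge> 2 then mt (2*(t-2)) else 0)"
proof -
  define c where "c = coeff (fpoly al (2*n+1))"
  have c0: "\<And>k. k > 2*n+1 \<Longrightarrow> c k = 0" unfolding c_def by (rule fpoly_coeff_0)
  have gg: "2*g-1 = 2*n+1" "2*g+1 = 2*n+3" using g by auto
  have mt: "mt (2 * s) = (if s \<le> 2*n+1 then c (2*n+1-s) else 0)" for s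
    unfolding mt_def mucoef_def gg c_def by simp
  have m: "m (2 * s) = (if s \<le> 2*n+3 then coeff ([:- a, 1:]^2 * fpoly al (2*n+1)) (2*n+3-s) else 0)" for s
    unfolding m_def mucoef_def gg by simp
  show ?thesis
  proof (cases "t \<le> 2*n+3")
    case False then show ?thesis unfolding m mt by auto
  next
    case True
    define k where "k = 2*n+3-t"
    have e1: "(if k \<ge> 2 then c (k-2) else 0) = (if t \<le> 2*n+1 then c (2*n+1-t) else 0)"
    proof (cases "t \<le> 2*n+1")
      case True then have "k \<ge> 2" "k - 2 = 2*n+1-t" unfolding k_def by auto
      then show ?thesis using True by simp
    next
      case False then have "\<not> k \<ge> 2" unfolding k_def by auto
      then show ?thesis using False by simp
    qed
    have e2: "(if k \<ge> 1 then c (k-1) else 0) = (if t \<ge> 1 then (if t-1 \<le> 2*n+1 then c (2*n+1-(t-1)) else 0) else 0)"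
    proof (cases "t = 0")
      case True then show ?thesis unfolding k_def using c0[of "2*n+2"] by simp
    next
      case False
      then have "k \<ge> 1 \<longleftrightarrow> t-1 \<le> 2*n+1" "k - 1 = 2*n+1-(t-1)" unfolding k_def by auto
      then show ?thesis using False by simp
    qed
    have e3: "c k = (if t \<ge> 2 then (if t-2 \<le> 2*n+1 then c (2*n+1-(t-2)) else 0) else 0)"
    proof (cases "t \<ge> 2")
      case False
      then have "k > 2*n+1" unfolding k_def by auto
      then show ?thesis using False c0 by simp
    next
      case t2: True
      then have "t-2 \<le> 2*n+1" "k = 2*n+1-(t-2)" unfolding k_def using True by auto
      then show ?thesis using t2 by simp
    qed
    have "m (2 * t) = (if k \<ge> 2 then c (k-2) else 0) - 2*a*(if k \<ge> 1 then c (k-1) else 0) + a^2 * c k"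
      unfolding m sq_mult_coeff c_def k_def using True by simp
    also have "\<dots> = mt (2*t) - 2*a*(if t \<ge> 1 then mt (2*(t-1)) else 0) + a^2*(if t \<ge> 2 then mt (2*(t-2)) else 0)"
      unfolding e1 e2 e3 mt by simp
    finally show ?thesis .
  qed
qed

lemma Hfun_rev:
  "Hfun h mu x1 x2 = (\<Sum>j=0..h. (x1*x2)^(h-j) * (2*mu(2*(2*j+1)) + mu(2*(2*j))*(x1+x2)))"
proof -
  have "Hfun h mu x1 x2 = (\<Sum>i=0..h. (x1 * x2) ^ (h - i) * (2 * mu (4*h + 2 - 4*(h-i)) + mu (4*h - 4*(h-i)) * (x1 + x2)))"
    unfolding Hfun_def by (subst sum.atLeastAtMost_rev) simp
  also have "\<dots> = (\<Sum>j=0..h. (x1*x2)^(h-j) * (2*mu(2*(2*j+1)) + mu(2*(2*j))*(x1+x2)))"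
  proof (intro sum.cong refl)
    fix j assume "j \<in> {0..h}"
    then have "4*h + 2 - 4*(h-j) = 2*(2*j+1)" "4*h - 4*(h-j) = 2*(2*j)" by auto
    then show "(x1 * x2) ^ (h - j) * (2 * mu (4*h + 2 - 4*(h-j)) + mu (4*h - 4*(h-j)) * (x1 + x2)) =
         (x1*x2)^(h-j) * (2*mu(2*(2*j+1)) + mu(2*(2*j))*(x1+x2))" by simp
  qed
  finally show ?thesis .
qed

lemma Hfun_identity:
  fixes al :: "nat \<Rightarrow> complex" and a x1 x2 :: complex
  assumes g: "g \<ge> 1"
  defines "mt \<equiv> mucoef (2*g-1) (fpoly al (2*g-1))"
  defines "m \<equiv> mucoef (2*g+1) ([:- a, 1:]^2 * fpoly al (2*g-1))"
  shows "Hfun g m x1 x2 = Hfun (g-1) mt x1 x2 * ((x1-a)*(x2-a))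
           + a*(x1-x2)^2 * (\<Sum>k=0..g-1. mt (4*k) * (x1*x2)^(g-1-k))"
proof -
  obtain n where n: "g = Suc n" using g by (cases g) auto
  define M where "M = (\<lambda>t. mt (2*t))"
  define m' where "m' = (\<lambda>t. M t - 2*a*(if t \<ge> 1 then M (t-1) else 0) + a^2*(if t \<ge> 2 then M (t-2) else 0))"
  have M0: "M t = 0" if "t > 2*n+1" for t
    using that n unfolding M_def mt_def mucoef_def by auto
  have mm: "m (2*t) = m' t" for t
  proof -
    have "m (2*t) = mt (2*t) - 2*a*(if t \<ge> 1 then mt (2*(t-1)) else 0) + a^2*(if t \<ge> 2 then mt (2*(t-2)) else 0)"
      unfolding mt_def m_def by (rule mu_rel[OF n])
    then show ?thesis unfolding m'_def M_def by (simp only:)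
  qed
  note PI = PI_generic[OF M0 m'_def, where P="x1*x2" and S="x1+x2"]
  have H1: "Hfun (g-1) mt x1 x2 = (\<Sum>j=0..n. (x1*x2)^(n-j) * (2*M(2*j+1) + M(2*j)*(x1+x2)))"
    unfolding Hfun_rev n M_def by simp
  have Hg: "Hfun g m x1 x2 = (\<Sum>j=0..Suc n. (x1*x2)^(Suc n-j) * (2*m'(2*j+1) + m'(2*j)*(x1+x2)))"
    unfolding Hfun_rev n mm by simp
  have S: "(\<Sum>k=0..g-1. mt (4*k) * (x1*x2)^(g-1-k)) = (\<Sum>k=0..n. M(2*k)*(x1*x2)^(n-k))"
    unfolding n M_def by simp
  have e1: "(x1-a)*(x2-a) = x1*x2 - a*(x1+x2) + a^2" by (simp add: algebra_simps power2_eq_square)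
  have e2: "(x1-x2)^2 = (x1+x2)^2 - 4*(x1*x2)" by (simp add: algebra_simps power2_eq_square)
  have gen: "Y = X*c + a*d*Z" if h: "X*c - Y = -a*d*Z" for X Y Z c d :: complex
  proof -
    have "Y = X*c - (X*c - Y)" by simp
    also have "\<dots> = X*c + a*d*Z" unfolding h by simp
    finally show ?thesis .
  qed
  show ?thesis unfolding H1 Hg S e1 e2 by (rule gen[OF PI])
qed

lemma has_sum_sum_fin:
  fixes f :: "'k \<Rightarrow> 'a \<Rightarrow> complex"
  assumes "finite K" "\<And>k. k \<in> K \<Longrightarrow> (f k has_sum s k) A"
  shows "((\<lambda>x. \<Sum>k\<in>K. f k x) has_sum (\<Sum>k\<in>K. s k)) A"
  using assms
proof (induction K rule: finite_induct)
  case empty then show ?case by simp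
next
  case (insert x F)
  then show ?case by (simp add: has_sum_add)
qed

lemma has_sum_prod_nat:
  fixes f g :: "nat \<Rightarrow> complex"
  assumes f: "(f has_sum a) UNIV" and g: "(g has_sum b) UNIV"
  shows "((\<lambda>(i,j). f i * g j) has_sum (a * b)) (UNIV \<times> UNIV)"
proof (rule has_sum_SigmaI[where g = "\<lambda>i. f i * b"])
  show "((\<lambda>j. (\<lambda>(i,j). f i * g j) (i, j)) has_sum f i * b) UNIV" for i
    using has_sum_cmult_right[OF g, of "f i"] by simp
  show "((\<lambda>i. f i * b) has_sum a * b) UNIV"
    by (rule has_sum_cmult_left[OF f])
  have fa: "(\<lambda>i. norm (f i)) summable_on UNIV"
    using f summable_on_iff_abs_summable_on_complex has_sum_imp_summable by blast
  have ga: "(\<lambda>i. norm (g i)) summable_on UNIV"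
    using g summable_on_iff_abs_summable_on_complex has_sum_imp_summable by blast
  have "(\<lambda>x. norm ((\<lambda>(i,j). f i * g j) x)) summable_on UNIV \<times> UNIV"
  proof (subst Infinite_Sum.abs_summable_on_Sigma_iff, intro conjI ballI)
    fix i :: nat
    show "(\<lambda>j. norm ((\<lambda>(i,j). f i * g j) (i, j))) summable_on UNIV"
      using summable_on_cmult_right[OF ga, of "norm (f i)"] by (simp add: norm_mult)
  next
    have "(\<lambda>i. norm (f i) * infsum (\<lambda>j. norm (g j)) UNIV) summable_on UNIV"
      by (rule summable_on_cmult_left[OF fa])
    moreover have "infsum (\<lambda>y. norm ((\<lambda>(i,j). f i * g j) (x, y))) UNIV = norm (f x) * infsum (\<lambda>j. norm (g j)) UNIV" for x
      by (simp add: norm_mult infsum_cmult_right')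
    moreover have "infsum (\<lambda>j. norm (g j)) UNIV \<ge> 0" by (rule infsum_nonneg) simp
    ultimately show "(\<lambda>x. norm (infsum (\<lambda>y. norm ((\<lambda>(i,j). f i * g j) (x, y))) UNIV)) summable_on UNIV"
      by simp
  qed
  then show "(\<lambda>(i,j). f i * g j) summable_on UNIV \<times> UNIV"
    using summable_on_iff_abs_summable_on_complex by blast
qed

lemma U1:
  fixes c :: "nat \<Rightarrow> complex"
  assumes r: "r > 0" and H: "\<And>w. w \<noteq> 0 \<Longrightarrow> norm w < r \<Longrightarrow> ((\<lambda>n. c n * w^n) has_sum 0) UNIV"
  shows "c n = 0"
proof -
  define F where "F = Abs_fps c"
  define phi where "phi = (\<lambda>u::complex. if u = 0 then c 0 else 0)"
  have ev: "eventually (\<lambda>u. (\<lambda>n. fps_nth F n * u ^ n) sums phi u) (nhds 0)"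
  proof -
    have "eventually (\<lambda>u. u \<in> ball 0 r) (nhds (0::complex))"
      by (rule eventually_nhds_in_open) (use r in auto)
    then show ?thesis
    proof (rule eventually_mono)
      fix u :: complex assume u: "u \<in> ball 0 r"
      show "(\<lambda>n. fps_nth F n * u ^ n) sums phi u"
      proof (cases "u = 0")
        case True then show ?thesis using powser_sums_zero[of c] by (simp add: F_def phi_def)
      next
        case False
        then show ?thesis using H[of u] u by (auto simp: F_def phi_def intro: has_sum_imp_sums)
      qed
    qed
  qed
  have exp: "phi has_fps_expansion F" by (rule has_fps_expansionI[OF ev])
  have "continuous (at 0) phi" using has_fps_expansion_imp_continuous[OF exp] by simp
  then have t1: "(phi \<longlongrightarrow> phi 0) (at 0)" by (simp add: continuous_at)
  have "eventually (\<lambda>u. phi u = 0) (at (0::complex))"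
    by (auto simp: eventually_at_filter phi_def)
  then have t2: "(phi \<longlongrightarrow> 0) (at 0)" by (rule tendsto_eventually)
  have "phi 0 = 0" using tendsto_unique[OF _ t1 t2] by simp
  then have "phi = (\<lambda>_. 0)" by (auto simp: phi_def)
  then have "(\<lambda>_. 0) has_fps_expansion F" using exp by simp
  then have "F = 0" using fps_expansion_unique_complex has_fps_expansion_0 by blast
  moreover have "c n = F $ n" by (simp add: F_def)
  ultimately show ?thesis by simp
qed

lemma Suc_image: "Suc ` UNIV = {1::nat..}"
proof (rule set_eqI)
  fix x :: nat show "x \<in> Suc ` UNIV \<longleftrightarrow> x \<in> {1..}" by (cases x) auto
qed

lemma reindex1:
  "((\<lambda>j. F j * w^(j-1)) has_sum s) {1..} \<longleftrightarrow> ((\<lambda>n. F (Suc n) * w^n) has_sum (s::complex)) UNIV"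
proof -
  have "((\<lambda>j. F j * w^(j-1)) has_sum s) (Suc ` UNIV) \<longleftrightarrow> (((\<lambda>j. F j * w^(j-1)) \<circ> Suc) has_sum s) UNIV"
    by (rule has_sum_reindex) simp
  then show ?thesis by (simp add: Suc_image o_def)
qed

lemma U2:
  fixes d :: "nat \<Rightarrow> nat \<Rightarrow> complex"
  assumes r: "r > 0"
    and H: "\<And>z1 z2. z1 \<noteq> 0 \<Longrightarrow> z2 \<noteq> 0 \<Longrightarrow> norm z1 < r \<Longrightarrow> norm z2 < r \<Longrightarrow> z1^2 \<noteq> z2^2 \<Longrightarrow>
        ((\<lambda>(i,j). d i j * z1^(i-1) * z2^(j-1)) has_sum 0) ({1..} \<times> {1..})"
    and ij: "i \<ge> 1" "j \<ge> 1"
  shows "d i j = 0"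
proof -
  have row: "((\<lambda>j. d i j * z2^(j-1)) has_sum 0) {1..}" if z2: "z2 \<noteq> 0" "norm z2 < r" and i: "i \<ge> 1" for z2 i
  proof -
    define rho where "rho k = infsum (\<lambda>j. d k j * z2^(j-1)) {1..}" for k
    have facts: "(\<forall>k\<ge>1. (\<lambda>j. d k j * z2^(j-1)) summable_on {1..}) \<and> ((\<lambda>k. rho k * z1^(k-1)) has_sum 0) {1..}"
      if z1: "z1 \<noteq> 0" "norm z1 < norm z2" for z1
    proof -
      have "z1^2 \<noteq> z2^2"
      proof
        assume "z1^2 = z2^2"
        then have "norm z1 ^ 2 = norm z2 ^ 2" by (metis norm_power)
        then have "norm z1 = norm z2" by (simp add: power2_eq_iff_nonneg)
        then show False using z1 by simp
      qed
      then have hs: "((\<lambda>(i,j). d i j * z1^(i-1) * z2^(j-1)) has_sum 0) ({1..} \<times> {1..})"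
        using H[of z1 z2] z1 z2 by auto
      have sm: "(\<lambda>(k,j). d k j * z1^(k-1) * z2^(j-1)) summable_on ({1..} \<times> {1..})"
        using hs has_sum_imp_summable by blast
      have rs: "(\<lambda>j. d k j * z2^(j-1)) summable_on {1..}" if "k \<ge> 1" for k
      proof -
        have "(\<lambda>j. d k j * z1^(k-1) * z2^(j-1)) summable_on {1..}"
          using summable_on_SigmaD1[OF sm, of k] that by simp
        then have "(\<lambda>j. z1^(k-1) * (d k j * z2^(j-1))) summable_on {1..}"
          by (simp add: mult_ac)
        moreover have c: "z1^(k-1) \<noteq> 0" using z1 by simp
        ultimately show ?thesis using summable_on_cmult_right'[OF c, of "\<lambda>j. d k j * z2^(j-1)" "{1..}"] by blast
      qed
      have rh: "((\<lambda>j. (\<lambda>(i,j). d i j * z1^(i-1) * z2^(j-1)) (k, j)) has_sum (rho k * z1^(k-1))) {1..}"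
        if "k \<in> {1..}" for k
      proof -
        have "((\<lambda>j. z1^(k-1) * (d k j * z2^(j-1))) has_sum (z1^(k-1) * rho k)) {1..}"
          using has_sum_cmult_right[OF has_sum_infsum[OF rs]] that by (simp add: rho_def)
        then show ?thesis by (simp add: mult_ac)
      qed
      have "((\<lambda>k. rho k * z1^(k-1)) has_sum 0) {1..}"
        by (rule has_sum_Sigma'[OF hs rh])
      with rs show ?thesis by auto
    qed
    have "rho (Suc n) = 0" for n
    proof (rule U1[where r="norm z2" and c="\<lambda>n. rho (Suc n)"])
      show "norm z2 > 0" using z2 by simp
      fix w :: complex assume "w \<noteq> 0" "norm w < norm z2"
      then have "((\<lambda>k. rho k * w^(k-1)) has_sum 0) {1..}" using facts by blast
      then show "((\<lambda>n. rho (Suc n) * w^n) has_sum 0) UNIV" by (simp only: reindex1)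
    qed
    then have r0: "rho i = 0" using i by (cases i) auto
    have "(\<lambda>j. d i j * z2^(j-1)) summable_on {1..}"
      using facts[of "z2/2"] z2 i by (auto simp: norm_divide)
    then show ?thesis using r0 has_sum_infsum unfolding rho_def by metis
  qed
  have "d i (Suc n) = 0" for n
  proof (rule U1[OF r, where c="\<lambda>n. d i (Suc n)"])
    fix w :: complex assume "w \<noteq> 0" "norm w < r"
    then have "((\<lambda>j. d i j * w^(j-1)) has_sum 0) {1..}" using row[of w i] ij by blast
    then show "((\<lambda>n. d i (Suc n) * w^n) has_sum 0) UNIV" by (simp only: reindex1)
  qed
  then show ?thesis using ij by (cases j) auto
qed

lemma alg:
  fixes z1 z2 a F1 F2 H1v Hgv Sv :: complex and n :: nat
  assumes z1: "z1 \<noteq> 0" and z2: "z2 \<noteq> 0" and zz: "z1^2 \<noteq> z2^2" and F1: "F1 \<noteq> 0" and F2: "F2 \<noteq> 0"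
    and e1: "1 - a*z1^2 \<noteq> 0" and e2: "1 - a*z2^2 \<noteq> 0"
    and HI: "Hgv = H1v * ((1/z1^2 - a)*(1/z2^2 - a)) + a*(1/z1^2 - 1/z2^2)^2 * Sv"
  shows "(let x1 = 1/z1^2; x2 = 1/z2^2 in (1/(2*(x1-x2)^2) + H1v/(4*(x1-x2)^2 * (F1/z1^(2*Suc n-1)) * (F2/z2^(2*Suc n-1)))) * ((-2/z1^3)*(-2/z2^3)) - 1/(z1-z2)^2)
      - (let x1 = 1/z1^2; x2 = 1/z2^2 in (1/(2*(x1-x2)^2) + Hgv/(4*(x1-x2)^2 * ((1-a*z1^2)*F1/z1^(2*Suc n+1)) * ((1-a*z2^2)*F2/z2^(2*Suc n+1)))) * ((-2/z1^3)*(-2/z2^3)) - 1/(z1-z2)^2)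
      = -a * Sv * (z1*z2)^(2*n) / ((1-a*z1^2)*F1*((1-a*z2^2)*F2))"
proof -
  define x1 where "x1 = 1/z1^2"
  define x2 where "x2 = 1/z2^2"
  define Y1 where "Y1 = F1/z1^(2*n+1)"
  define Y2 where "Y2 = F2/z2^(2*n+1)"
  define J where "J = (-2/z1^3)*(-2/z2^3)"
  define D where "D = (x1-x2)^2"
  have ex: "2*Suc n - 1 = 2*n+1" "2*Suc n + 1 = 2*n+3" by auto
  have G1: "(1-a*z1^2)*F1/z1^(2*n+3) = (x1 - a) * Y1"
    unfolding x1_def Y1_def using z1 by (simp add: field_simps power_add eval_nat_numeral)
  have G2: "(1-a*z2^2)*F2/z2^(2*n+3) = (x2 - a) * Y2"
    unfolding x2_def Y2_def using z2 by (simp add: field_simps power_add eval_nat_numeral)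
  have xx: "x1 \<noteq> x2" unfolding x1_def x2_def using z1 z2 zz by (auto simp: field_simps)
  have D0: "D \<noteq> 0" unfolding D_def using xx by simp
  have a1: "x1 - a \<noteq> 0" unfolding x1_def using z1 e1 by (auto simp: field_simps)
  have a2: "x2 - a \<noteq> 0" unfolding x2_def using z2 e2 by (auto simp: field_simps)
  have Y10: "Y1 \<noteq> 0" unfolding Y1_def using F1 z1 by simp
  have Y20: "Y2 \<noteq> 0" unfolding Y2_def using F2 z2 by simp
  have HI': "Hgv = H1v * ((x1 - a)*(x2 - a)) + a*D*Sv" unfolding HI x1_def x2_def D_def by simp
  have "LHS = (1/(2*D) + H1v/(4*D*Y1*Y2)) * J - 1/(z1-z2)^2 - ((1/(2*D) + Hgv/(4*D*((x1-a)*Y1)*((x2-a)*Y2))) * J - 1/(z1-z2)^2)"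
    if "LHS = (let x1 = 1/z1^2; x2 = 1/z2^2 in (1/(2*(x1-x2)^2) + H1v/(4*(x1-x2)^2 * (F1/z1^(2*Suc n-1)) * (F2/z2^(2*Suc n-1)))) * ((-2/z1^3)*(-2/z2^3)) - 1/(z1-z2)^2)
      - (let x1 = 1/z1^2; x2 = 1/z2^2 in (1/(2*(x1-x2)^2) + Hgv/(4*(x1-x2)^2 * ((1-a*z1^2)*F1/z1^(2*Suc n+1)) * ((1-a*z2^2)*F2/z2^(2*Suc n+1)))) * ((-2/z1^3)*(-2/z2^3)) - 1/(z1-z2)^2)" for LHS
    using that unfolding Let_def ex G1[symmetric] G2[symmetric] by (simp add: x1_def x2_def Y1_def Y2_def J_def D_def mult.assoc)
  moreover have "(1/(2*D) + H1v/(4*D*Y1*Y2)) * J - 1/(z1-z2)^2 - ((1/(2*D) + Hgv/(4*D*((x1-a)*Y1)*((x2-a)*Y2))) * J - 1/(z1-z2)^2)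
     = - a * Sv * J / (4 * ((x1-a)*Y1) * ((x2-a)*Y2))"
  proof -
    define P where "P = (x1-a)*(x2-a)"
    have P0: "P \<noteq> 0" unfolding P_def using a1 a2 by simp
    have r: "4*D*((x1-a)*Y1)*((x2-a)*Y2) = 4*D*P*Y1*Y2" "4 * ((x1-a)*Y1) * ((x2-a)*Y2) = 4*P*Y1*Y2"
      unfolding P_def by (simp_all only: mult_ac)
    have q: "(H1v * P + a*D*Sv) / (4*D*P*Y1*Y2) = H1v/(4*D*Y1*Y2) + a*Sv/(4*P*Y1*Y2)"
      using D0 P0 Y10 Y20 by (simp add: add_divide_distrib mult.assoc)
    show ?thesis unfolding HI' r P_def[symmetric] q by (simp add: algebra_simps)
  qed
  moreover have "- a * Sv * J / (4 * ((x1-a)*Y1) * ((x2-a)*Y2)) = -a * Sv * (z1*z2)^(2*n) / ((1-a*z1^2)*F1*((1-a*z2^2)*F2))"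
  proof -
    have gen: "-a*Sv*((-2/z1^3)*(-2/z2^3))/(4*(Q1/z1^(2*n+3))*(Q2/z2^(2*n+3))) = -a*Sv*(z1*z2)^(2*n)/(Q1*Q2)"
      if "Q1 \<noteq> 0" "Q2 \<noteq> 0" for Q1 Q2
      using that z1 z2 by (simp add: field_simps power_add eval_nat_numeral power_mult_distrib)
    show ?thesis unfolding G1[symmetric] G2[symmetric] J_def
      by (rule gen) (use e1 e2 F1 F2 in auto)
  qed
  ultimately show ?thesis by simp
qed

lemma schur_nat: "schur (Lam al a g) (int n) = Sfps al a g $ n"
  by (simp add: schur_def Sfps_def Lfps_def)

lemma schur_neg: "m < 0 \<Longrightarrow> schur t m = 0"
  by (simp add: schur_def)

lemma shifted_prod:
  fixes u1 u2 p1 p2 :: complex and k :: nat and s :: "int \<Rightarrow> complex"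
  assumes h1: "((\<lambda>n. s (int n) * u1^n) has_sum p1) UNIV" and h2: "((\<lambda>n. s (int n) * u2^n) has_sum p2) UNIV"
    and sneg: "\<And>m. m < 0 \<Longrightarrow> s m = 0"
  shows "((\<lambda>(i,j). s (int i - int k) * s (int j - int k) * u1^i * u2^j) has_sum ((u1*u2)^k * (p1*p2))) (UNIV \<times> UNIV)"
proof -
  define G where "G = (\<lambda>(i::nat,j::nat). s (int i - int k) * s (int j - int k) * u1^i * u2^j)"
  define e where "e = (\<lambda>(a::nat,b::nat). (a+k, b+k))"
  have pr: "((\<lambda>(i,j). (s (int i) * u1^i) * (s (int j) * u2^j)) has_sum (p1*p2)) (UNIV \<times> UNIV)"
    by (rule has_sum_prod_nat[OF h1 h2])
  have "((\<lambda>x. (u1*u2)^k * (\<lambda>(i,j). (s (int i) * u1^i) * (s (int j) * u2^j)) x) has_sum ((u1*u2)^k * (p1*p2))) (UNIV \<times> UNIV)"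
    by (rule has_sum_cmult_right[OF pr])
  moreover have "(\<lambda>x. (u1*u2)^k * (\<lambda>(i,j). (s (int i) * u1^i) * (s (int j) * u2^j)) x) = G \<circ> e"
    by (auto simp: G_def e_def power_add power_mult_distrib fun_eq_iff)
  ultimately have "((G \<circ> e) has_sum ((u1*u2)^k * (p1*p2))) (UNIV \<times> UNIV)" by simp
  moreover have "inj_on e (UNIV \<times> UNIV)" by (auto simp: e_def inj_on_def)
  ultimately have "(G has_sum ((u1*u2)^k * (p1*p2))) (e ` (UNIV \<times> UNIV))"
    using has_sum_reindex by blast
  moreover have "(G has_sum x) (e ` (UNIV \<times> UNIV)) \<longleftrightarrow> (G has_sum x) (UNIV \<times> UNIV)" for x
  proof (rule has_sum_cong_neutral)
    fix y assume y: "y \<in> UNIV \<times> UNIV - e ` (UNIV \<times> UNIV)"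
    obtain i j where ij: "y = (i,j)" by fastforce
    have "i < k \<or> j < k"
    proof (rule ccontr)
      assume "\<not> (i < k \<or> j < k)"
      then have "y = e (i-k, j-k)" by (auto simp: e_def ij)
      then show False using y by auto
    qed
    then show "G y = 0" unfolding ij G_def using sneg by auto
  qed auto
  ultimately show ?thesis unfolding G_def by simp
qed

definition Vf :: "(complex \<Rightarrow> complex \<Rightarrow> complex) \<Rightarrow> (complex \<Rightarrow> complex) \<Rightarrow> complex \<Rightarrow> complex \<Rightarrow> complex" where
  "Vf H y z1 z2 = (let x1 = 1 / z1^2; x2 = 1 / z2^2 in
      (1 / (2 * (x1 - x2)^2) + H x1 x2 / (4 * (x1 - x2)^2 * y z1 * y z2))
           * ((-2 / z1^3) * (-2 / z2^3)) - 1 / (z1 - z2)^2)"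

lemma expansionD:
  assumes "expansion H y q"
  shows "\<exists>r>0. \<forall>z1 z2. z1 \<noteq> 0 \<and> z2 \<noteq> 0 \<and> norm z1 < r \<and> norm z2 < r \<and> z1^2 \<noteq> z2^2 \<longrightarrow>
     ((\<lambda>(i,j). q i j * z1 ^ (i - 1) * z2 ^ (j - 1)) has_sum Vf H y z1 z2) ({1..} \<times> {1..})"
  using assms unfolding expansion_def Vf_def Let_def .

theorem proposition5:
  fixes g :: nat and al :: "nat \<Rightarrow> complex" and a :: complex
    and qg qg1 :: "nat \<Rightarrow> nat \<Rightarrow> complex"
  assumes "g \<ge> 1"
    and "inj_on al {1..2*g-1}" and "a \<notin> al ` {1..2*g-1}"
    and "expansion
           (Hfun g (mucoef (2*g+1) ([:- a, 1:]^2 * fpoly al (2*g-1))))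
           (\<lambda>z. (1 - a * z^2) * F0fun al g z / z ^ (2*g+1)) qg"
    and "expansion
           (Hfun (g-1) (mucoef (2*g-1) (fpoly al (2*g-1))))
           (\<lambda>z. F0fun al g z / z ^ (2*g-1)) qg1"
  shows "\<forall>i j. - qg (2*i+1) (2*j+1) + qg1 (2*i+1) (2*j+1)
           = - a * (\<Sum>k=0..g-1. mucoef (2*g-1) (fpoly al (2*g-1)) (4*k)
                 * schur (Lam al a g) (int i - int k) * schur (Lam al a g) (int j - int k))"
proof -
  obtain n where n: "g = Suc n" using assms(1) by (cases g) auto
  define mt where "mt = mucoef (2*g-1) (fpoly al (2*g-1))"
  define m where "m = mucoef (2*g+1) ([:- a, 1:]^2 * fpoly al (2*g-1))"
  define s where "s = schur (Lam al a g)"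
  define R where "R i j = - a * (\<Sum>k=0..g-1. mt (4*k) * s (int i - int k) * s (int j - int k))" for i j :: nat
  define c where "c i j = (if odd i \<and> odd j then R ((i-1) div 2) ((j-1) div 2) else 0)" for i j :: nat
  define yg where "yg = (\<lambda>z::complex. (1 - a * z^2) * F0fun al g z / z ^ (2*g+1))"
  define y1 where "y1 = (\<lambda>z::complex. F0fun al g z / z ^ (2*g-1))"
  define phi where "phi z = 1 / ((1 - a*z^2) * F0fun al g z)" for z :: complex
  obtain r1 where r1: "r1 > 0" and E1: "\<And>z1 z2. z1 \<noteq> 0 \<Longrightarrow> z2 \<noteq> 0 \<Longrightarrow> norm z1 < r1 \<Longrightarrow> norm z2 < r1 \<Longrightarrow> z1^2 \<noteq> z2^2 \<Longrightarrow>
     ((\<lambda>(i,j). qg i j * z1 ^ (i - 1) * z2 ^ (j - 1)) has_sum Vf (Hfun g m) yg z1 z2) ({1..} \<times> {1..})"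
    using expansionD[OF assms(4)] unfolding m_def yg_def by blast
  obtain r2 where r2: "r2 > 0" and E2: "\<And>z1 z2. z1 \<noteq> 0 \<Longrightarrow> z2 \<noteq> 0 \<Longrightarrow> norm z1 < r2 \<Longrightarrow> norm z2 < r2 \<Longrightarrow> z1^2 \<noteq> z2^2 \<Longrightarrow>
     ((\<lambda>(i,j). qg1 i j * z1 ^ (i - 1) * z2 ^ (j - 1)) has_sum Vf (Hfun (g-1) mt) y1 z1 z2) ({1..} \<times> {1..})"
    using expansionD[OF assms(5)] unfolding mt_def y1_def by blast
  obtain r3 where r3: "r3 > 0" and E3: "\<And>u. norm u < r3 \<Longrightarrow> (1 - a*u) * csqrt (\<Prod>j\<in>{1..2*g-1}. 1 - al j * u) \<noteq> 0 \<and>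
     ((\<lambda>n. Sfps al a g $ n * u^n) has_sum (1 / ((1 - a*u) * csqrt (\<Prod>j\<in>{1..2*g-1}. 1 - al j * u)))) UNIV"
    using h_series[of a al g] by blast
  define r where "r = min r1 (min r2 (min 1 r3))"
  have r: "r > 0" unfolding r_def using r1 r2 r3 by simp
  have small: "norm (z^2) < r3" if "norm z < r" for z :: complex
  proof -
    have "norm z < 1" "norm z < r3" using that unfolding r_def by auto
    then have "norm z * norm z < 1 * r3" by (intro mult_strict_mono') auto
    then show ?thesis by (simp add: norm_power norm_mult power2_eq_square)
  qed
  have pt: "((\<lambda>(i,j). (- qg i j + qg1 i j - c i j) * z1^(i-1) * z2^(j-1)) has_sum 0) ({1..} \<times> {1..})"
    if z: "z1 \<noteq> 0" "z2 \<noteq> 0" "norm z1 < r" "norm z2 < r" "z1^2 \<noteq> z2^2" for z1 z2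
  proof -
    have nz: "(1 - a*z^2) * F0fun al g z \<noteq> 0" and hs: "((\<lambda>n. s (int n) * (z^2)^n) has_sum phi z) UNIV"
      if "norm z < r" for z
      using E3[OF small[OF that]] by (simp_all add: F0fun_def phi_def s_def schur_nat)
    note nz1 = nz[OF z(3)] and nz2 = nz[OF z(4)]
    define C where "C = - a * (\<Sum>k=0..g-1. mt (4*k) * ((z1^2*z2^2)^k * (phi z1 * phi z2)))"
    have sneg: "\<And>m. m < 0 \<Longrightarrow> s m = 0" unfolding s_def by (rule schur_neg)
    have hk: "((\<lambda>(i,j). s (int i - int k) * s (int j - int k) * (z1^2)^i * (z2^2)^j) has_sum ((z1^2*z2^2)^k * (phi z1 * phi z2))) (UNIV \<times> UNIV)" for k
      by (rule shifted_prod[OF hs[OF z(3)] hs[OF z(4)] sneg])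
    have "((\<lambda>x. \<Sum>k=0..g-1. mt (4*k) * (\<lambda>(i,j). s (int i - int k) * s (int j - int k) * (z1^2)^i * (z2^2)^j) x)
          has_sum (\<Sum>k=0..g-1. mt (4*k) * ((z1^2*z2^2)^k * (phi z1 * phi z2)))) (UNIV \<times> UNIV)"
      by (intro has_sum_sum_fin has_sum_cmult_right hk) simp
    then have "((\<lambda>x. - a * (\<Sum>k=0..g-1. mt (4*k) * (\<lambda>(i,j). s (int i - int k) * s (int j - int k) * (z1^2)^i * (z2^2)^j) x))
          has_sum C) (UNIV \<times> UNIV)"
      unfolding C_def by (rule has_sum_cmult_right)
    moreover have "(\<lambda>x. - a * (\<Sum>k=0..g-1. mt (4*k) * (\<lambda>(i,j). s (int i - int k) * s (int j - int k) * (z1^2)^i * (z2^2)^j) x))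
        = (\<lambda>(i,j). R i j * (z1^2)^i * (z2^2)^j)"
      by (auto simp: R_def fun_eq_iff sum_distrib_left sum_distrib_right mult_ac)
    ultimately have hR: "((\<lambda>(i,j). R i j * (z1^2)^i * (z2^2)^j) has_sum C) (UNIV \<times> UNIV)" by simp
    define emap where "emap = (\<lambda>(i::nat,j::nat). (2*i+1, 2*j+1))"
    define cs where "cs = (\<lambda>(i,j). c i j * z1^(i-1) * z2^(j-1))"
    have "cs \<circ> emap = (\<lambda>(i,j). R i j * (z1^2)^i * (z2^2)^j)"
      by (auto simp: cs_def emap_def c_def fun_eq_iff power_mult)
    with hR have "((cs \<circ> emap) has_sum C) (UNIV \<times> UNIV)" by simp
    moreover have "inj_on emap (UNIV \<times> UNIV)" by (auto simp: emap_def inj_on_def)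
    ultimately have "(cs has_sum C) (emap ` (UNIV \<times> UNIV))" using has_sum_reindex by blast
    moreover have "(cs has_sum C) (emap ` (UNIV \<times> UNIV)) \<longleftrightarrow> (cs has_sum C) ({1..} \<times> {1..})"
    proof (rule has_sum_cong_neutral)
      fix y assume y: "y \<in> {1..} \<times> {1..} - emap ` (UNIV \<times> UNIV)"
      obtain i j where ij: "y = (i,j)" by fastforce
      have "\<not> (odd i \<and> odd j)"
      proof
        assume "odd i \<and> odd j"
        then have "y = emap ((i-1) div 2, (j-1) div 2)" by (auto simp: emap_def ij)
        then show False using y by auto
      qed
      then show "cs y = 0" using that by (auto simp: cs_def ij c_def)
    next
      fix y assume "y \<in> emap ` (UNIV \<times> UNIV) - {1..} \<times> {1..}"
      then show "cs y = 0" by (auto simp: emap_def)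
    qed auto
    ultimately have hc: "((\<lambda>(i,j). c i j * z1^(i-1) * z2^(j-1)) has_sum C) ({1..} \<times> {1..})"
      unfolding cs_def by simp
    have zr1: "norm z1 < r1" "norm z2 < r1" "norm z1 < r2" "norm z2 < r2" using z unfolding r_def by auto
    have hq: "((\<lambda>(i,j). qg i j * z1 ^ (i - 1) * z2 ^ (j - 1)) has_sum Vf (Hfun g m) yg z1 z2) ({1..} \<times> {1..})"
      by (rule E1) (use z zr1 in auto)
    have hq1: "((\<lambda>(i,j). qg1 i j * z1 ^ (i - 1) * z2 ^ (j - 1)) has_sum Vf (Hfun (g-1) mt) y1 z1 z2) ({1..} \<times> {1..})"
      by (rule E2) (use z zr1 in auto)
    define Sv where "Sv = (\<Sum>k=0..g-1. mt (4*k) * ((1/z1^2)*(1/z2^2))^(g-1-k))"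
    have HI: "Hfun g m (1/z1^2) (1/z2^2) = Hfun (g-1) mt (1/z1^2) (1/z2^2) * ((1/z1^2 - a)*(1/z2^2 - a)) + a*(1/z1^2 - 1/z2^2)^2 * Sv"
      unfolding Sv_def m_def mt_def by (rule Hfun_identity[OF assms(1)])
    have alg1: "Vf (Hfun (g-1) mt) y1 z1 z2 - Vf (Hfun g m) yg z1 z2
       = -a * Sv * (z1*z2)^(2*n) / ((1-a*z1^2)*F0fun al g z1*((1-a*z2^2)*F0fun al g z2))"
    proof -
      have f: "F0fun al g z1 \<noteq> 0" "F0fun al g z2 \<noteq> 0" "1 - a*z1^2 \<noteq> 0" "1 - a*z2^2 \<noteq> 0"
        using nz1 nz2 by auto
      show ?thesis
        using alg[OF z(1,2,5) f HI]
        unfolding Vf_def y1_def yg_def Let_def n .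
    qed
    have "Sv * (z1*z2)^(2*n) = (\<Sum>k=0..g-1. mt (4*k) * (z1^2*z2^2)^k)"
      unfolding Sv_def sum_distrib_right
    proof (intro sum.cong refl)
      fix k assume "k \<in> {0..g-1}"
      then have k: "k \<le> n" using n by auto
      have "((1/z1^2)*(1/z2^2))^(n-k) * (z1*z2)^(2*n) = (z1^2*z2^2)^k"
      proof -
        have "(z1*z2)^(2*n) = (z1^2*z2^2)^((n-k)+k)"
          using k by (simp add: power_mult power_mult_distrib)
        also have "\<dots> = (z1^2*z2^2)^(n-k) * (z1^2*z2^2)^k" by (rule power_add)
        finally have "(z1*z2)^(2*n) = (z1^2*z2^2)^(n-k) * (z1^2*z2^2)^k" .
        then show ?thesis using z(1,2) by (simp add: power_mult_distrib field_simps)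
      qed
      then show "mt (4*k) * ((1/z1^2)*(1/z2^2))^(g-1-k) * (z1*z2)^(2*n) = mt (4*k) * (z1^2*z2^2)^k"
        using n by (simp add: mult.assoc)
    qed
    note sf = this
    define Q where "Q = (1-a*z1^2)*F0fun al g z1*((1-a*z2^2)*F0fun al g z2)"
    have pp: "phi z1 * phi z2 = 1/Q" by (simp add: phi_def Q_def)
    have alg2: "Vf (Hfun (g-1) mt) y1 z1 z2 - Vf (Hfun g m) yg z1 z2 = C"
    proof -
      have "Vf (Hfun (g-1) mt) y1 z1 z2 - Vf (Hfun g m) yg z1 z2 = -a*(Sv*(z1*z2)^(2*n))*(1/Q)"
        unfolding alg1 Q_def[symmetric] by simp
      also have "\<dots> = -a*(\<Sum>k=0..g-1. mt (4*k) * (z1^2*z2^2)^k)*(1/Q)" unfolding sf ..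
      also have "\<dots> = C" unfolding C_def pp by (simp add: sum_distrib_right mult.assoc flip: sum_divide_distrib)
      finally show ?thesis .
    qed
    have "((\<lambda>x. - (\<lambda>(i,j). qg i j * z1 ^ (i - 1) * z2 ^ (j - 1)) x + (\<lambda>(i,j). qg1 i j * z1 ^ (i - 1) * z2 ^ (j - 1)) x
           + - (\<lambda>(i,j). c i j * z1^(i-1) * z2^(j-1)) x)
          has_sum (- Vf (Hfun g m) yg z1 z2 + Vf (Hfun (g-1) mt) y1 z1 z2 + - C)) ({1..} \<times> {1..})"
      by (intro has_sum_add has_sum_uminusI hq hq1 hc)
    moreover have "- Vf (Hfun g m) yg z1 z2 + Vf (Hfun (g-1) mt) y1 z1 z2 + - C = 0" using alg2 by simp
    ultimately show ?thesis by (simp add: case_prod_unfold algebra_simps)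
  qed
  have D0: "- qg i j + qg1 i j - c i j = 0" if "i \<ge> 1" "j \<ge> 1" for i j
    by (rule U2[OF r pt that]) auto
  show ?thesis
  proof (intro allI)
    fix i j :: nat
    have "- qg (2*i+1) (2*j+1) + qg1 (2*i+1) (2*j+1) = c (2*i+1) (2*j+1)"
      using D0[of "2*i+1" "2*j+1"] by simp
    also have "\<dots> = R i j" by (simp add: c_def)
    finally show "- qg (2*i+1) (2*j+1) + qg1 (2*i+1) (2*j+1)
           = - a * (\<Sum>k=0..g-1. mucoef (2*g-1) (fpoly al (2*g-1)) (4*k)
                 * schur (Lam al a g) (int i - int k) * schur (Lam al a g) (int j - int k))"
      by (simp add: R_def mt_def s_def)
  qed
qed

end
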